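(* Let $\mathcal D_{st}=(D,<_{st},\rho)$ and $\mathcal D_{wk}=(D,<_{wk},\rho)$ be two computable partially ordered sets on the same set $D$ such that $<_{st}$ extends $<_{wk}$. Then $K^{\mathcal D_{st}}_{\min}\le_{ct}K^{\mathcal D_{wk}}_{\min}$ and $K^{\mathcal D_{st}}_{\max}\le_{ct}K^{\mathcal D_{wk}}_{\max}$.
   Context: A computable partially ordered set is a triple $\mathcal D=(D,<,\rho)$ where $\rho:\mathbb N\to D$ is a bijection and $<$ is a strict partial order on $D$ with $\{(m,n):\rho(m)<\rho(n)\}$ computable; a partial function into $D$ is partial computable if its composition with $\rho^{-1}$ is. For a partial $f:\{0,1\}^*\times\mathbb N\to D$ monotone increasing in its second argument on its domain, $\max^{\mathcal D}f$ is the partial function defined exactly at those $p$ for which $\{f(p,t):t,\ f(p,t)\text{ defined}\}$ is finite and non-empty, with value its maximum. $\mathrm{Max}_{\mathrm{PR}}[\{0,1\}^*\to\mathcal D]$ is the class of all $\max^{\mathcal D}f$ with $f$ partial computable and monotone increasing in its second argument. For partial $\varphi:\{0,1\}^*\to D$, $K_\varphi(d)=\min\{|p|:\varphi(p)=d\}$. $K^{\mathcal D}_{\max}$ is $K_U$ for some $U$ optimal in $\mathrm{Max}_{\mathrm{PR}}[\{0,1\}^*\to\mathcal D]$ (for every $F$ in the class, $K_U\le K_F+c$ wherever $K_F$ is defined, for some $c$); $K^{\mathcal D}_{\min}$ is $K^{\mathcal D'}_{\max}$ for the reverse order $\mathcal D'=(D,>,\rho)$. These are total functions $D\to\mathbb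 N$ defined up to an additive constant. $f\le_{ct}g$ iff $\exists c\,\forall d\ f(d)\le g(d)+c$. *)

theory Defs
  imports Main
begin

datatype recf = Zero | Succ | Proj nat | Comp recf "recf list" | Prim recf recf | Mu recf

inductive eval :: "recf \<Rightarrow> nat list \<Rightarrow> nat \<Rightarrow> bool" where
  eval_zero: "eval Zero xs 0"
| eval_succ: "eval Succ (x # xs) (Suc x)"
| eval_proj: "i < length xs \<Longrightarrow> eval (Proj i) xs (xs ! i)"
| eval_comp: "length ys = length gs \<Longrightarrow> (\<forall>i<length gs. eval (gs ! i) xs (ys ! i))
      \<Longrightarrow> eval f ys z \<Longrightarrow> eval (Comp f gs) xs z"
| eval_prim0: "eval g xs y \<Longrightarrow> eval (Prim g h) (0 # xs) y"
| eval_primS: "eval (Prim g h) (n # xs) y \<Longrightarrow> eval h (y # n # xs) z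
      \<Longrightarrow> eval (Prim g h) (Suc n # xs) z"
| eval_mu: "eval f (n # xs) 0 \<Longrightarrow> (\<forall>m<n. \<exists>k. eval f (m # xs) (Suc k))
      \<Longrightarrow> eval (Mu f) xs n"

fun enc :: "bool list \<Rightarrow> nat" where
  "enc [] = 0"
| "enc (b # bs) = 2 * enc bs + (if b then 2 else 1)"

definition strict_po :: "('d \<Rightarrow> 'd \<Rightarrow> bool) \<Rightarrow> bool" where
  "strict_po lt \<longleftrightarrow> (\<forall>x. \<not> lt x x) \<and> (\<forall>x y z. lt x y \<longrightarrow> lt y z \<longrightarrow> lt x z)"

definition computable_poset :: "('d \<Rightarrow> 'd \<Rightarrow> bool) \<Rightarrow> (nat \<Rightarrow> 'd) \<Rightarrow> bool" where
  "computable_poset lt \<rho> \<longleftrightarrow> bij \<rho> \<and> strict_po lt \<and>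
     (\<exists>g. \<forall>m n. eval g [m, n] (if lt (\<rho> m) (\<rho> n) then 1 else 0))"

definition partial_computable2 :: "(nat \<Rightarrow> 'd) \<Rightarrow> (bool list \<Rightarrow> nat \<Rightarrow> 'd option) \<Rightarrow> bool" where
  "partial_computable2 \<rho> f \<longleftrightarrow>
     (\<exists>g. \<forall>p t y. eval g [enc p, t] y \<longleftrightarrow> f p t = Some (\<rho> y))"

definition mono_incr :: "('d \<Rightarrow> 'd \<Rightarrow> bool) \<Rightarrow> (bool list \<Rightarrow> nat \<Rightarrow> 'd option) \<Rightarrow> bool" where
  "mono_incr lt f \<longleftrightarrow> (\<forall>p t t' a b. t \<le> t' \<longrightarrow> f p t = Some a \<longrightarrow> f p t' = Some b
       \<longrightarrow> (a = b \<or> lt a b))"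

definition maxD :: "('d \<Rightarrow> 'd \<Rightarrow> bool) \<Rightarrow> (bool list \<Rightarrow> nat \<Rightarrow> 'd option) \<Rightarrow> bool list \<Rightarrow> 'd option" where
  "maxD lt f p =
     (let S = {d. \<exists>t. f p t = Some d} in
      if finite S \<and> S \<noteq> {} then Some (THE d. d \<in> S \<and> (\<forall>e\<in>S. e = d \<or> lt e d)) else None)"

definition MaxPR :: "('d \<Rightarrow> 'd \<Rightarrow> bool) \<Rightarrow> (nat \<Rightarrow> 'd) \<Rightarrow> (bool list \<Rightarrow> 'd option) set" where
  "MaxPR lt \<rho> = {maxD lt f | f. partial_computable2 \<rho> f \<and> mono_incr lt f}"

definition Kc :: "(bool list \<Rightarrow> 'd option) \<Rightarrow> 'd \<Rightarrow> nat option" where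
  "Kc \<phi> d = (if \<exists>p. \<phi> p = Some d then Some (LEAST n. \<exists>p. \<phi> p = Some d \<and> length p = n) else None)"

definition optimal_max :: "('d \<Rightarrow> 'd \<Rightarrow> bool) \<Rightarrow> (nat \<Rightarrow> 'd) \<Rightarrow> (bool list \<Rightarrow> 'd option) \<Rightarrow> bool" where
  "optimal_max lt \<rho> U \<longleftrightarrow> U \<in> MaxPR lt \<rho> \<and>
     (\<forall>F\<in>MaxPR lt \<rho>. \<exists>c. \<forall>d n. Kc F d = Some n \<longrightarrow> (\<exists>m. Kc U d = Some m \<and> m \<le> n + c))"

text \<open>Optimal for the reverse order (used for K_min).\<close>
definition optimal_min :: "('d \<Rightarrow> 'd \<Rightarrow> bool) \<Rightarrow> (nat \<Rightarrow> 'd) \<Rightarrow> (bool list \<Rightarrow> 'd option) \<Rightarrow> bool" where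
  "optimal_min lt \<rho> U \<longleftrightarrow> optimal_max (\<lambda>x y. lt y x) \<rho> U"

definition le_ct :: "('d \<Rightarrow> nat option) \<Rightarrow> ('d \<Rightarrow> nat option) \<Rightarrow> bool" where
  "le_ct f g \<longleftrightarrow> (\<exists>c. \<forall>d n. g d = Some n \<longrightarrow> (\<exists>m. f d = Some m \<and> m \<le> n + c))"

end

theory Submission
  imports Defs
begin

lemma maxD_eq:
  assumes sub: "\<And>x y. lt1 x y \<Longrightarrow> lt2 x y" and po: "strict_po lt2"
    and mono: "mono_incr lt1 f"
  shows "maxD lt1 f p = maxD lt2 f p"
proof -
  define S where "S = {d. \<exists>t. f p t = Some d}"
  show ?thesis
  proof (cases "finite S \<and> S \<noteq> {}")
    case False
    then have "\<not> (finite S \<and> S \<noteq> {})" by blast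
    then show ?thesis unfolding maxD_def Let_def S_def[symmetric] by (simp only: if_False)
  next
    case True
    define tt where "tt d = (SOME t. f p t = Some d)" for d
    have tt: "f p (tt d) = Some d" if "d \<in> S" for d
      using that unfolding tt_def S_def by (auto intro: someI_ex)
    define T where "T = Max (tt ` S)"
    have fin: "finite (tt ` S)" and ne: "tt ` S \<noteq> {}" using True by auto
    have "T \<in> tt ` S" unfolding T_def using Max_in[OF fin ne] .
    then obtain d0 where d0: "d0 \<in> S" "T = tt d0" by auto
    have fT: "f p T = Some d0" using tt[OF d0(1)] d0(2) by simp
    have big: "e = d0 \<or> lt1 e d0" if "e \<in> S" for e
    proof -
      have "tt e \<le> T" unfolding T_def using fin that by auto
      then show ?thesis using mono tt[OF that] fT unfolding mono_incr_def by blast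
    qed
    have uniq: "d = d0" if "d \<in> S" "\<forall>e\<in>S. e = d \<or> lt2 e d" for d
    proof (rule ccontr)
      assume ne: "d \<noteq> d0"
      have "lt2 d d0" using big[OF that(1)] ne sub by auto
      moreover have "lt2 d0 d" using that(2) d0(1) ne by auto
      ultimately show False using po unfolding strict_po_def by blast
    qed
    have uniq1: "d = d0" if "d \<in> S" "\<forall>e\<in>S. e = d \<or> lt1 e d" for d
      proof -
      have "\<forall>e\<in>S. e = d \<or> lt2 e d" using that(2) sub by blast
      then show ?thesis using uniq that(1) by blast
    qed
    have t1: "(THE d. d \<in> S \<and> (\<forall>e\<in>S. e = d \<or> lt1 e d)) = d0"
    proof (rule the_equality)
      show "d0 \<in> S \<and> (\<forall>e\<in>S. e = d0 \<or> lt1 e d0)" using d0(1) big by blast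
    next
      fix d assume "d \<in> S \<and> (\<forall>e\<in>S. e = d \<or> lt1 e d)"
      then show "d = d0" using uniq1 by blast
    qed
    have t2: "(THE d. d \<in> S \<and> (\<forall>e\<in>S. e = d \<or> lt2 e d)) = d0"
    proof (rule the_equality)
      have "\<forall>e\<in>S. e = d0 \<or> lt2 e d0"
      proof
        fix e assume "e \<in> S" then have "e = d0 \<or> lt1 e d0" by (rule big)
        then show "e = d0 \<or> lt2 e d0" using sub by blast
      qed
      then show "d0 \<in> S \<and> (\<forall>e\<in>S. e = d0 \<or> lt2 e d0)" using d0(1) by blast
    next
      fix d assume "d \<in> S \<and> (\<forall>e\<in>S. e = d \<or> lt2 e d)"
      then show "d = d0" using uniq by blast
    qed
    show ?thesis unfolding maxD_def Let_def S_def[symmetric] using True t1 t2 by simp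
  qed
qed

lemma MaxPR_sub:
  assumes sub: "\<And>x y. lt1 x y \<Longrightarrow> lt2 x y" and po: "strict_po lt2"
  shows "MaxPR lt1 \<rho> \<subseteq> MaxPR lt2 \<rho>"
proof
  fix U assume "U \<in> MaxPR lt1 \<rho>"
  then obtain f where U: "U = maxD lt1 f" "partial_computable2 \<rho> f" "mono_incr lt1 f"
    unfolding MaxPR_def by auto
  have m2: "mono_incr lt2 f" using U(3) sub unfolding mono_incr_def by blast
  have "U = maxD lt2 f" using U(1) maxD_eq[OF sub po U(3)] by auto
  then show "U \<in> MaxPR lt2 \<rho>" unfolding MaxPR_def using U(2) m2 by auto
qed

lemma opt_le:
  assumes sub: "\<And>x y. lt1 x y \<Longrightarrow> lt2 x y" and po: "strict_po lt2"
    and o2: "optimal_max lt2 \<rho> U2" and o1: "optimal_max lt1 \<rho> U1"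
  shows "le_ct (Kc U2) (Kc U1)"
proof -
  have "U1 \<in> MaxPR lt2 \<rho>" using o1 MaxPR_sub[OF sub po] unfolding optimal_max_def by blast
  then show ?thesis using o2 unfolding optimal_max_def le_ct_def by blast
qed

theorem mainTheorem16:
  fixes less_st less_wk :: "'d \<Rightarrow> 'd \<Rightarrow> bool" and \<rho> :: "nat \<Rightarrow> 'd"
  assumes "computable_poset less_st \<rho>"
    and "computable_poset less_wk \<rho>"
    and "\<And>x y. less_wk x y \<Longrightarrow> less_st x y"
  shows "(\<forall>Ust Uwk. optimal_min less_st \<rho> Ust \<longrightarrow> optimal_min less_wk \<rho> Uwk
            \<longrightarrow> le_ct (Kc Ust) (Kc Uwk))
       \<and> (\<forall>Ust Uwk. optimal_max less_st \<rho> Ust \<longrightarrow> optimal_max less_wk \<rho> Uwk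
            \<longrightarrow> le_ct (Kc Ust) (Kc Uwk))"
proof -
  have po: "strict_po less_st" using assms(1) unfolding computable_poset_def by blast
  have po': "strict_po (\<lambda>x y. less_st y x)" using po unfolding strict_po_def by blast
  show ?thesis
    unfolding optimal_min_def
    using opt_le[of less_wk less_st, OF assms(3) po]
          opt_le[of "\<lambda>x y. less_wk y x" "\<lambda>x y. less_st y x", OF assms(3) po']
    by blast
qed

end
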